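(* Let $O_1,O_2$ be two non-projective ovoids of $S_3(3)$ such that $O_1\cap O_2$ consists of exactly four points which are pairwise at distance $3$ (i.e. differ in all three coordinates). Then the graph whose vertex set is the symmetric difference $O_1\,\triangle\,O_2$ and in which two vertices are adjacent iff they are collinear in $S_3(3)$ is isomorphic to the Nauru graph (the generalized Petersen graph $G(12,5)$).
   Context: Let $L=\mathrm{PG}(1,3)$, a set of $4$ points. The Segre variety $S_3(3)$ has point set $L^3$, and its lines are the $4$-element sets obtained by fixing two coordinates and letting the third run over $L$; two points are collinear if they differ in exactly one coordinate, and the distance between two points is the number of coordinates in which they differ. An ovoid is a set of points meeting every line in exactly one point. With $V=\mathrm{GF}(3)^2$, the Segre embedding sends $([x_1],[x_2],[x_3])$ to $[x_1\otimes x_2\otimes x_3]\in\mathrm{PG}(7,3)=\mathbb{P}(V^{\otimes3})$; an ovoid is non-projective if it is not the set of points whose images lie in a hyperplane of $\mathrm{PG}(7,3)$. *)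

theory Defs
  imports Main "HOL-Library.Numeral_Type"
begin

text \<open>GF(3) is the numeral type 3 (integers mod 3, a commutative ring which is the field GF(3)).
Vectors of V = GF(3)^2 are pairs; coordinate index is bool (False = first, True = second).\<close>

type_synonym gf3 = "3"
type_synonym vec2 = "gf3 \<times> gf3"

definition comp :: "vec2 \<Rightarrow> bool \<Rightarrow> gf3" where
  "comp v b = (if b then snd v else fst v)"

text \<open>PG(1,3): the 1-dimensional subspaces of GF(3)^2, each represented by its unique
normalized spanning vector (first nonzero coordinate equal to 1).\<close>
definition PG13 :: "vec2 set" where
  "PG13 = {v. v \<noteq> (0,0) \<and> (fst v = 0 \<longrightarrow> snd v = 1) \<and> (fst v \<noteq> 0 \<longrightarrow> fst v = 1)}"

type_synonym spt = "vec2 \<times> vec2 \<times> vec2"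

definition segre_points :: "spt set" where
  "segre_points = PG13 \<times> PG13 \<times> PG13"

definition segre_lines :: "spt set set" where
  "segre_lines =
     {{(x, b, c) | x. x \<in> PG13} | b c. b \<in> PG13 \<and> c \<in> PG13} \<union>
     {{(a, x, c) | x. x \<in> PG13} | a c. a \<in> PG13 \<and> c \<in> PG13} \<union>
     {{(a, b, x) | x. x \<in> PG13} | a b. a \<in> PG13 \<and> b \<in> PG13}"

definition sdist :: "spt \<Rightarrow> spt \<Rightarrow> nat" where
  "sdist p q = (case p of (a1, a2, a3) \<Rightarrow> case q of (b1, b2, b3) \<Rightarrow>
      (if a1 = b1 then 0 else 1) + (if a2 = b2 then 0 else 1) + (if a3 = b3 then 0 else 1))"

definition collinear :: "spt \<Rightarrow> spt \<Rightarrow> bool" where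
  "collinear p q \<longleftrightarrow> sdist p q = 1"

definition ovoid :: "spt set \<Rightarrow> bool" where
  "ovoid S \<longleftrightarrow> S \<subseteq> segre_points \<and> (\<forall>l \<in> segre_lines. card (S \<inter> l) = 1)"

text \<open>Value of the linear functional with coefficients c on the Segre image x1 \<otimes> x2 \<otimes> x3.\<close>
definition segre_form :: "(bool \<Rightarrow> bool \<Rightarrow> bool \<Rightarrow> gf3) \<Rightarrow> spt \<Rightarrow> gf3" where
  "segre_form c p = (case p of (x1, x2, x3) \<Rightarrow>
     (\<Sum>i\<in>UNIV. \<Sum>j\<in>UNIV. \<Sum>k\<in>UNIV. c i j k * comp x1 i * comp x2 j * comp x3 k))"

text \<open>Projective: the set of points whose Segre image lies in some hyperplane of PG(7,3).\<close>
definition projective_ovoid :: "spt set \<Rightarrow> bool" where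
  "projective_ovoid S \<longleftrightarrow>
     (\<exists>c. (\<exists>i j k. c i j k \<noteq> 0) \<and> S = {p \<in> segre_points. segre_form c p = 0})"

text \<open>Generalized Petersen graph G(n,k): vertices (False,i) = u_i and (True,i) = v_i, i < n;
edges u_i u_{i+1}, u_i v_i, v_i v_{i+k} (indices mod n).\<close>
definition gp_vertices :: "nat \<Rightarrow> (bool \<times> nat) set" where
  "gp_vertices n = UNIV \<times> {..<n}"

definition gp_adj :: "nat \<Rightarrow> nat \<Rightarrow> bool \<times> nat \<Rightarrow> bool \<times> nat \<Rightarrow> bool" where
  "gp_adj n k x y \<longleftrightarrow>
     (case (x, y) of
       ((False, i), (False, j)) \<Rightarrow> j = (i + 1) mod n \<or> i = (j + 1) mod n
     | ((True, i), (True, j)) \<Rightarrow> j = (i + k) mod n \<or> i = (j + k) mod n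
     | ((_, i), (_, j)) \<Rightarrow> i = j)"

definition nauru_vertices :: "(bool \<times> nat) set" where
  "nauru_vertices = gp_vertices 12"

definition nauru_adj :: "bool \<times> nat \<Rightarrow> bool \<times> nat \<Rightarrow> bool" where
  "nauru_adj = gp_adj 12 5"

end

theory Submission
  imports Defs
begin

abbreviation "e0 \<equiv> ((0::3),(1::3))"
abbreviation "e1 \<equiv> ((1::3),(0::3))"
abbreviation "e2 \<equiv> ((1::3),(1::3))"
abbreviation "e3 \<equiv> ((1::3),(2::3))"

lemma ex3: "(x::3) = 0 \<or> x = 1 \<or> x = 2"
proof (cases x)
  case (of_int z)
  then have "z = 0 \<or> z = 1 \<or> z = 2" by auto
  then show ?thesis using of_int by auto
qed

lemma PG13_eq: "PG13 = {e0,e1,e2,e3}"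
  unfolding PG13_def
  apply (rule set_eqI)
  subgoal for v
    apply (cases v)
    subgoal for a b
      using ex3[of a] ex3[of b] by (elim disjE) simp_all
    done
  done

lemma pg_cases:
  assumes "x \<in> PG13"
    and "x = e0 \<Longrightarrow> P" and "x = e1 \<Longrightarrow> P" and "x = e2 \<Longrightarrow> P" and "x = e3 \<Longrightarrow> P"
  shows P
  using assms unfolding PG13_eq by blast

lemma L1: "b \<in> PG13 \<Longrightarrow> c \<in> PG13 \<Longrightarrow> {(x,b,c) | x. x \<in> PG13} \<in> segre_lines"
  unfolding segre_lines_def apply (rule UnI1, rule UnI1) by blast
lemma L2: "a \<in> PG13 \<Longrightarrow> c \<in> PG13 \<Longrightarrow> {(a,x,c) | x. x \<in> PG13} \<in> segre_lines"
  unfolding segre_lines_def apply (rule UnI1, rule UnI2) by blast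
lemma L3: "a \<in> PG13 \<Longrightarrow> b \<in> PG13 \<Longrightarrow> {(a,b,x) | x. x \<in> PG13} \<in> segre_lines"
  unfolding segre_lines_def apply (rule UnI2) by blast

lemma ovoid_pt: "ovoid S \<Longrightarrow> (a,b,c) \<in> S \<Longrightarrow> a \<in> PG13 \<and> b \<in> PG13 \<and> c \<in> PG13"
  unfolding ovoid_def segre_points_def by blast

lemma card1_unique: "card A = 1 \<Longrightarrow> p \<in> A \<Longrightarrow> q \<in> A \<Longrightarrow> p = q"
  by (metis card_1_singletonE singletonD)

lemma ovoid_uniq: assumes "ovoid S" "l \<in> segre_lines" "p \<in> S" "p \<in> l" "q \<in> S" "q \<in> l" shows "p = q"
proof -
  have "card (S \<inter> l) = 1" using assms(1,2) unfolding ovoid_def by simp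
  then show ?thesis by (rule card1_unique) (simp_all add: assms)
qed

lemma U3: assumes "ovoid S" "(a,b,c) \<in> S" "(a,b,c') \<in> S" shows "c = c'"
proof -
  have p1: "a \<in> PG13" "b \<in> PG13" "c \<in> PG13" using ovoid_pt[OF assms(1,2)] by auto
  have p2: "c' \<in> PG13" using ovoid_pt[OF assms(1,3)] by auto
  have "(a,b,c) = (a,b,c')"
    by (rule ovoid_uniq[OF assms(1) L3[OF p1(1,2)] assms(2) _ assms(3)]) (use p1 p2 in blast)+
  then show ?thesis by simp
qed

lemma rowdiff: assumes "ovoid S" "(a,b,c) \<in> S" "(a,b',c') \<in> S" "b \<noteq> b'" shows "c \<noteq> c'"
proof
  assume e: "c = c'"
  have p1: "a \<in> PG13" "b \<in> PG13" "c \<in> PG13" using ovoid_pt[OF assms(1,2)] by auto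
  have p2: "b' \<in> PG13" using ovoid_pt[OF assms(1,3)] by auto
  have "(a,b,c) = (a,b',c)"
    by (rule ovoid_uniq[OF assms(1) L2[OF p1(1,3)] assms(2) _ assms(3)[unfolded e[symmetric]]]) (use p1 p2 in blast)+
  then show False using assms(4) by simp
qed

lemma coldiff: assumes "ovoid S" "(a,b,c) \<in> S" "(a',b,c') \<in> S" "a \<noteq> a'" shows "c \<noteq> c'"
proof
  assume e: "c = c'"
  have p1: "a \<in> PG13" "b \<in> PG13" "c \<in> PG13" using ovoid_pt[OF assms(1,2)] by auto
  have p2: "a' \<in> PG13" using ovoid_pt[OF assms(1,3)] by auto
  have "(a,b,c) = (a',b,c)"
    by (rule ovoid_uniq[OF assms(1) L1[OF p1(2,3)] assms(2) _ assms(3)[unfolded e[symmetric]]]) (use p1 p2 in blast)+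
  then show False using assms(4) by simp
qed

lemma ovoid_ex: assumes "ovoid S" "a \<in> PG13" "b \<in> PG13" shows "\<exists>c. c \<in> PG13 \<and> (a,b,c) \<in> S"
proof -
  have "card (S \<inter> {(a,b,x) | x. x \<in> PG13}) = 1" using assms(1) L3[OF assms(2,3)] unfolding ovoid_def by simp
  then obtain p where "S \<inter> {(a,b,x) | x. x \<in> PG13} = {p}" by (rule card_1_singletonE)
  then have "p \<in> S" "p \<in> {(a,b,x) | x. x \<in> PG13}" by auto
  then obtain x where "p = (a,b,x)" "x \<in> PG13" "p \<in> S" by blast
  then show ?thesis by blast
qed

lemma ovoid_eqI:
  assumes "ovoid S" "B \<subseteq> S" "\<forall>a\<in>PG13. \<forall>b\<in>PG13. \<exists>c. (a,b,c) \<in> B"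
  shows "S = B"
proof
  show "S \<subseteq> B"
  proof
    fix p assume p: "p \<in> S"
    obtain a b c where pe: "p = (a,b,c)" by (cases p) auto
    have ab: "a \<in> PG13" "b \<in> PG13" using ovoid_pt[OF assms(1)] p pe by auto
    obtain c' where "(a,b,c') \<in> B" using assms(3) ab by blast
    moreover then have "c = c'" using U3[OF assms(1), of a b c c'] p pe assms(2) by blast
    ultimately show "p \<in> B" using pe by simp
  qed
qed (rule assms(2))

lemma ein0: "e0 \<in> PG13" by (simp add: PG13_eq)
lemma ein1: "e1 \<in> PG13" by (simp add: PG13_eq)
lemma ein2: "e2 \<in> PG13" by (simp add: PG13_eq)
lemma ein3: "e3 \<in> PG13" by (simp add: PG13_eq)

definition XL :: "'a \<Rightarrow> 'a \<Rightarrow> 'a \<Rightarrow> 'a \<Rightarrow> ('a\<times>'a\<times>'a) list" where "XL a0 a1 a2 a3 = [(a0,a0,a0), (a0,a1,a2), (a0,a2,a3), (a0,a3,a1), (a1,a0,a3), (a1,a1,a1), (a1,a2,a0), (a1,a3,a2), (a2,a0,a1), (a2,a1,a3), (a2,a2,a2), (a2,a3,a0), (a3,a0,a2), (a3,a1,a0), (a3,a2,a1), (a3,a3,a3)]"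
definition YL :: "'a \<Rightarrow> 'a \<Rightarrow> 'a \<Rightarrow> 'a \<Rightarrow> ('a\<times>'a\<times>'a) list" where "YL a0 a1 a2 a3 = [(a0,a0,a0), (a0,a1,a3), (a0,a2,a1), (a0,a3,a2), (a1,a0,a2), (a1,a1,a1), (a1,a2,a3), (a1,a3,a0), (a2,a0,a3), (a2,a1,a0), (a2,a2,a2), (a2,a3,a1), (a3,a0,a1), (a3,a1,a2), (a3,a2,a0), (a3,a3,a3)]"
definition ZL :: "'a \<Rightarrow> 'a \<Rightarrow> 'a \<Rightarrow> 'a \<Rightarrow> ('a\<times>'a\<times>'a) list" where "ZL a0 a1 a2 a3 = [(a0,a1,a2), (a0,a2,a3), (a0,a3,a1), (a1,a0,a3), (a1,a2,a0), (a1,a3,a2), (a2,a0,a1), (a2,a1,a3), (a2,a3,a0), (a3,a0,a2), (a3,a1,a0), (a3,a2,a1), (a0,a1,a3), (a0,a2,a1), (a0,a3,a2), (a1,a0,a2), (a1,a2,a3), (a1,a3,a0), (a2,a0,a3), (a2,a1,a0), (a2,a3,a1), (a3,a0,a1), (a3,a1,a2), (a3,a2,a0)]"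
definition FT :: "'a \<Rightarrow> 'a \<Rightarrow> 'a \<Rightarrow> 'a \<Rightarrow> (('a\<times>'a\<times>'a) \<times> (bool \<times> nat)) list" where "FT a0 a1 a2 a3 = [((a0,a1,a2),(False,0)), ((a0,a2,a3),(True,1)), ((a0,a3,a1),(True,11)), ((a1,a0,a3),(True,3)), ((a1,a2,a0),(False,8)), ((a1,a3,a2),(False,10)), ((a2,a0,a1),(False,4)), ((a2,a1,a3),(False,2)), ((a2,a3,a0),(True,9)), ((a3,a0,a2),(True,5)), ((a3,a1,a0),(True,7)), ((a3,a2,a1),(False,6)), ((a0,a1,a3),(False,1)), ((a0,a2,a1),(True,6)), ((a0,a3,a2),(False,11)), ((a1,a0,a2),(True,10)), ((a1,a2,a3),(True,8)), ((a1,a3,a0),(False,9)), ((a2,a0,a3),(False,3)), ((a2,a1,a0),(True,2)), ((a2,a3,a1),(True,4)), ((a3,a0,a1),(False,5)), ((a3,a1,a2),(True,0)), ((a3,a2,a0),(False,7))]"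

definition sd3 :: "'a\<times>'a\<times>'a \<Rightarrow> 'a\<times>'a\<times>'a \<Rightarrow> nat" where
  "sd3 p q = (case p of (a1, a2, a3) \<Rightarrow> case q of (b1, b2, b3) \<Rightarrow>
      (if a1 = b1 then 0 else 1) + (if a2 = b2 then 0 else 1) + (if a3 = b3 then 0 else 1))"

lemma sdist_sd3: "sdist = sd3"
  unfolding sdist_def sd3_def by (rule ext, rule ext) simp

lemma set_minus_filter': "set xs - set ys = set (filter (\<lambda>x. x \<notin> set ys) xs)"
  by auto

lemma map_of_the_in: "distinct (map fst t) \<Longrightarrow> (p,x) \<in> set t \<Longrightarrow> the (map_of t p) = x"
  by simp

lemma tab_inj:
  assumes "distinct (map fst t)" "distinct (map snd t)"
  shows "inj_on (\<lambda>p. the (map_of t p)) (set (map fst t))"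
proof (rule inj_onI)
  fix p q assume p: "p \<in> set (map fst t)" and q: "q \<in> set (map fst t)"
    and e: "the (map_of t p) = the (map_of t q)"
  obtain x where px: "(p,x) \<in> set t" using p by auto
  obtain y where qy: "(q,y) \<in> set t" using q by auto
  have "x = y" using e map_of_the_in[OF assms(1) px] map_of_the_in[OF assms(1) qy] by simp
  moreover have "inj_on snd (set t)" using assms(2) by (simp add: distinct_map)
  ultimately show "p = q" using px qy by (metis inj_on_contraD prod.inject snd_conv)
qed

lemma tab_img:
  assumes "distinct (map fst t)"
  shows "(\<lambda>p. the (map_of t p)) ` set (map fst t) = set (map snd t)"
  using assms by (force simp: image_iff)

context
  fixes a0 a1 a2 a3 :: 'a
  assumes d01: "a0 \<noteq> a1" and d02: "a0 \<noteq> a2" and d03: "a0 \<noteq> a3"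
    and d12: "a1 \<noteq> a2" and d13: "a1 \<noteq> a3" and d23: "a2 \<noteq> a3"
begin

lemma dd: "a0 \<noteq> a1" "a0 \<noteq> a2" "a0 \<noteq> a3" "a1 \<noteq> a2" "a1 \<noteq> a3" "a2 \<noteq> a3"
  "a1 \<noteq> a0" "a2 \<noteq> a0" "a3 \<noteq> a0" "a2 \<noteq> a1" "a3 \<noteq> a1" "a3 \<noteq> a2"
  using d01 d02 d03 d12 d13 d23 by auto

lemma ZLeq: "(set (XL a0 a1 a2 a3) - set (YL a0 a1 a2 a3)) \<union> (set (YL a0 a1 a2 a3) - set (XL a0 a1 a2 a3)) = set (ZL a0 a1 a2 a3)"
  unfolding set_minus_filter' set_append[symmetric] XL_def YL_def ZL_def by (simp add: dd)

lemma FT_fst: "map fst (FT a0 a1 a2 a3) = ZL a0 a1 a2 a3"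
  unfolding FT_def ZL_def by simp

lemma FT_dist: "distinct (map fst (FT a0 a1 a2 a3))"
  unfolding FT_fst unfolding ZL_def by (simp add: dd)

definition row_ok :: "'a \<Rightarrow> 'a \<Rightarrow> 'a \<Rightarrow> 'a \<Rightarrow> 'a\<times>'a\<times>'a \<Rightarrow> bool\<times>nat \<Rightarrow> bool" where
  "row_ok b0 b1 b2 b3 p x \<longleftrightarrow> (\<forall>(q,y)\<in>set (FT b0 b1 b2 b3). sd3 p q = 1 \<longleftrightarrow> nauru_adj x y)"

lemma row0: "row_ok a0 a1 a2 a3 (a0,a1,a2) (False,0)"
  unfolding row_ok_def FT_def apply (simp only: list.set ball_simps split_conv) by (simp add: sd3_def nauru_adj_def gp_adj_def dd)

lemma row1: "row_ok a0 a1 a2 a3 (a0,a2,a3) (True,1)"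
  unfolding row_ok_def FT_def apply (simp only: list.set ball_simps split_conv) by (simp add: sd3_def nauru_adj_def gp_adj_def dd)

lemma row2: "row_ok a0 a1 a2 a3 (a0,a3,a1) (True,11)"
  unfolding row_ok_def FT_def apply (simp only: list.set ball_simps split_conv) by (simp add: sd3_def nauru_adj_def gp_adj_def dd)

lemma row3: "row_ok a0 a1 a2 a3 (a1,a0,a3) (True,3)"
  unfolding row_ok_def FT_def apply (simp only: list.set ball_simps split_conv) by (simp add: sd3_def nauru_adj_def gp_adj_def dd)

lemma row4: "row_ok a0 a1 a2 a3 (a1,a2,a0) (False,8)"
  unfolding row_ok_def FT_def apply (simp only: list.set ball_simps split_conv) by (simp add: sd3_def nauru_adj_def gp_adj_def dd)

lemma row5: "row_ok a0 a1 a2 a3 (a1,a3,a2) (False,10)"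
  unfolding row_ok_def FT_def apply (simp only: list.set ball_simps split_conv) by (simp add: sd3_def nauru_adj_def gp_adj_def dd)

lemma row6: "row_ok a0 a1 a2 a3 (a2,a0,a1) (False,4)"
  unfolding row_ok_def FT_def apply (simp only: list.set ball_simps split_conv) by (simp add: sd3_def nauru_adj_def gp_adj_def dd)

lemma row7: "row_ok a0 a1 a2 a3 (a2,a1,a3) (False,2)"
  unfolding row_ok_def FT_def apply (simp only: list.set ball_simps split_conv) by (simp add: sd3_def nauru_adj_def gp_adj_def dd)

lemma row8: "row_ok a0 a1 a2 a3 (a2,a3,a0) (True,9)"
  unfolding row_ok_def FT_def apply (simp only: list.set ball_simps split_conv) by (simp add: sd3_def nauru_adj_def gp_adj_def dd)

lemma row9: "row_ok a0 a1 a2 a3 (a3,a0,a2) (True,5)"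
  unfolding row_ok_def FT_def apply (simp only: list.set ball_simps split_conv) by (simp add: sd3_def nauru_adj_def gp_adj_def dd)

lemma row10: "row_ok a0 a1 a2 a3 (a3,a1,a0) (True,7)"
  unfolding row_ok_def FT_def apply (simp only: list.set ball_simps split_conv) by (simp add: sd3_def nauru_adj_def gp_adj_def dd)

lemma row11: "row_ok a0 a1 a2 a3 (a3,a2,a1) (False,6)"
  unfolding row_ok_def FT_def apply (simp only: list.set ball_simps split_conv) by (simp add: sd3_def nauru_adj_def gp_adj_def dd)

lemma row12: "row_ok a0 a1 a2 a3 (a0,a1,a3) (False,1)"
  unfolding row_ok_def FT_def apply (simp only: list.set ball_simps split_conv) by (simp add: sd3_def nauru_adj_def gp_adj_def dd)

lemma row13: "row_ok a0 a1 a2 a3 (a0,a2,a1) (True,6)"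
  unfolding row_ok_def FT_def apply (simp only: list.set ball_simps split_conv) by (simp add: sd3_def nauru_adj_def gp_adj_def dd)

lemma row14: "row_ok a0 a1 a2 a3 (a0,a3,a2) (False,11)"
  unfolding row_ok_def FT_def apply (simp only: list.set ball_simps split_conv) by (simp add: sd3_def nauru_adj_def gp_adj_def dd)

lemma row15: "row_ok a0 a1 a2 a3 (a1,a0,a2) (True,10)"
  unfolding row_ok_def FT_def apply (simp only: list.set ball_simps split_conv) by (simp add: sd3_def nauru_adj_def gp_adj_def dd)

lemma row16: "row_ok a0 a1 a2 a3 (a1,a2,a3) (True,8)"
  unfolding row_ok_def FT_def apply (simp only: list.set ball_simps split_conv) by (simp add: sd3_def nauru_adj_def gp_adj_def dd)

lemma row17: "row_ok a0 a1 a2 a3 (a1,a3,a0) (False,9)"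
  unfolding row_ok_def FT_def apply (simp only: list.set ball_simps split_conv) by (simp add: sd3_def nauru_adj_def gp_adj_def dd)

lemma row18: "row_ok a0 a1 a2 a3 (a2,a0,a3) (False,3)"
  unfolding row_ok_def FT_def apply (simp only: list.set ball_simps split_conv) by (simp add: sd3_def nauru_adj_def gp_adj_def dd)

lemma row19: "row_ok a0 a1 a2 a3 (a2,a1,a0) (True,2)"
  unfolding row_ok_def FT_def apply (simp only: list.set ball_simps split_conv) by (simp add: sd3_def nauru_adj_def gp_adj_def dd)

lemma row20: "row_ok a0 a1 a2 a3 (a2,a3,a1) (True,4)"
  unfolding row_ok_def FT_def apply (simp only: list.set ball_simps split_conv) by (simp add: sd3_def nauru_adj_def gp_adj_def dd)

lemma row21: "row_ok a0 a1 a2 a3 (a3,a0,a1) (False,5)"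
  unfolding row_ok_def FT_def apply (simp only: list.set ball_simps split_conv) by (simp add: sd3_def nauru_adj_def gp_adj_def dd)

lemma row22: "row_ok a0 a1 a2 a3 (a3,a1,a2) (True,0)"
  unfolding row_ok_def FT_def apply (simp only: list.set ball_simps split_conv) by (simp add: sd3_def nauru_adj_def gp_adj_def dd)

lemma row23: "row_ok a0 a1 a2 a3 (a3,a2,a0) (False,7)"
  unfolding row_ok_def FT_def apply (simp only: list.set ball_simps split_conv) by (simp add: sd3_def nauru_adj_def gp_adj_def dd)

lemma FT_adj: "\<forall>(p,x)\<in>set (FT a0 a1 a2 a3). row_ok a0 a1 a2 a3 p x"
  unfolding FT_def using row0 row1 row2 row3 row4 row5 row6 row7 row8 row9 row10 row11 row12 row13 row14 row15 row16 row17 row18 row19 row20 row21 row22 row23 by simp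


end

lemma FT_snd: "map snd (FT a0 a1 a2 a3) = [(False,0), (True,1), (True,11), (True,3), (False,8), (False,10), (False,4), (False,2), (True,9), (True,5), (True,7), (False,6), (False,1), (True,6), (False,11), (True,10), (True,8), (False,9), (False,3), (True,2), (True,4), (False,5), (True,0), (False,7)]"
  unfolding FT_def by simp

lemma nauru_eq: "nauru_vertices = set [(False,0), (False,1), (False,2), (False,3), (False,4), (False,5), (False,6), (False,7), (False,8), (False,9), (False,10), (False,11), (True,0), (True,1), (True,2), (True,3), (True,4), (True,5), (True,6), (True,7), (True,8), (True,9), (True,10), (True,11)]"
proof (rule set_eqI)
  fix x :: "bool \<times> nat"
  obtain b i where x: "x = (b,i)" by (cases x)
  show "x \<in> nauru_vertices \<longleftrightarrow> x \<in> set [(False,0), (False,1), (False,2), (False,3), (False,4), (False,5), (False,6), (False,7), (False,8), (False,9), (False,10), (False,11), (True,0), (True,1), (True,2), (True,3), (True,4), (True,5), (True,6), (True,7), (True,8), (True,9), (True,10), (True,11)]"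
    unfolding x nauru_vertices_def gp_vertices_def
  proof
    assume "(b,i) \<in> UNIV \<times> {..<12}"
    then have "i < 12" by simp
    then have "i = 0 \<or> i = 1 \<or> i = 2 \<or> i = 3 \<or> i = 4 \<or> i = 5 \<or> i = 6 \<or> i = 7 \<or> i = 8 \<or> i = 9 \<or> i = 10 \<or> i = 11" by arith
    then show "(b,i) \<in> set [(False,0), (False,1), (False,2), (False,3), (False,4), (False,5), (False,6), (False,7), (False,8), (False,9), (False,10), (False,11), (True,0), (True,1), (True,2), (True,3), (True,4), (True,5), (True,6), (True,7), (True,8), (True,9), (True,10), (True,11)]" by (cases b; elim disjE; simp)
  qed auto
qed

lemma FT_snd_dist: "distinct (map snd (FT a0 a1 a2 a3))"
  unfolding FT_snd by simp
lemma search: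
  fixes a0 a1 a2 a3 :: "'a"
  assumes "a0 \<noteq> a1" "a0 \<noteq> a2" "a0 \<noteq> a3" "a1 \<noteq> a2" "a1 \<noteq> a3" "a2 \<noteq> a3"
    and H0: "c01 \<in> {a0,a1,a2,a3}"
    and H1: "c02 \<in> {a0,a1,a2,a3}"
    and H2: "c03 \<in> {a0,a1,a2,a3}"
    and H3: "c10 \<in> {a0,a1,a2,a3}"
    and H4: "c12 \<in> {a0,a1,a2,a3}"
    and H5: "c13 \<in> {a0,a1,a2,a3}"
    and H6: "c20 \<in> {a0,a1,a2,a3}"
    and H7: "c21 \<in> {a0,a1,a2,a3}"
    and H8: "c23 \<in> {a0,a1,a2,a3}"
    and H9: "c30 \<in> {a0,a1,a2,a3}"
    and H10: "c31 \<in> {a0,a1,a2,a3}"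
    and H11: "c32 \<in> {a0,a1,a2,a3}"
    and H12: "a0 \<noteq> c01"
    and H13: "a0 \<noteq> c02"
    and H14: "a0 \<noteq> c03"
    and H15: "c01 \<noteq> c02"
    and H16: "c01 \<noteq> c03"
    and H17: "c02 \<noteq> c03"
    and H18: "c10 \<noteq> a1"
    and H19: "c10 \<noteq> c12"
    and H20: "c10 \<noteq> c13"
    and H21: "a1 \<noteq> c12"
    and H22: "a1 \<noteq> c13"
    and H23: "c12 \<noteq> c13"
    and H24: "c20 \<noteq> c21"
    and H25: "c20 \<noteq> a2"
    and H26: "c20 \<noteq> c23"
    and H27: "c21 \<noteq> a2"
    and H28: "c21 \<noteq> c23"
    and H29: "a2 \<noteq> c23"
    and H30: "c30 \<noteq> c31"
    and H31: "c30 \<noteq> c32"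
    and H32: "c30 \<noteq> a3"
    and H33: "c31 \<noteq> c32"
    and H34: "c31 \<noteq> a3"
    and H35: "c32 \<noteq> a3"
    and H36: "a0 \<noteq> c10"
    and H37: "a0 \<noteq> c20"
    and H38: "a0 \<noteq> c30"
    and H39: "c10 \<noteq> c20"
    and H40: "c10 \<noteq> c30"
    and H41: "c20 \<noteq> c30"
    and H42: "c01 \<noteq> a1"
    and H43: "c01 \<noteq> c21"
    and H44: "c01 \<noteq> c31"
    and H45: "a1 \<noteq> c21"
    and H46: "a1 \<noteq> c31"
    and H47: "c21 \<noteq> c31"
    and H48: "c02 \<noteq> c12"
    and H49: "c02 \<noteq> a2"
    and H50: "c02 \<noteq> c32"
    and H51: "c12 \<noteq> a2"
    and H52: "c12 \<noteq> c32"
    and H53: "a2 \<noteq> c32"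
    and H54: "c03 \<noteq> c13"
    and H55: "c03 \<noteq> c23"
    and H56: "c03 \<noteq> a3"
    and H57: "c13 \<noteq> c23"
    and H58: "c13 \<noteq> a3"
    and H59: "c23 \<noteq> a3"
  shows "(c01 = a2 \<and> c02 = a3 \<and> c03 = a1 \<and> c10 = a3 \<and> c12 = a0 \<and> c13 = a2 \<and> c20 = a1 \<and> c21 = a3 \<and> c23 = a0 \<and> c30 = a2 \<and> c31 = a0 \<and> c32 = a1) \<or> (c01 = a3 \<and> c02 = a1 \<and> c03 = a2 \<and> c10 = a2 \<and> c12 = a3 \<and> c13 = a0 \<and> c20 = a3 \<and> c21 = a0 \<and> c23 = a1 \<and> c30 = a1 \<and> c31 = a2 \<and> c32 = a0)"
  using assms(1) assms(2) assms(3) assms(4) assms(5) assms(6) H12 H13 H14 H15 H16 H17 H18 H19 H20 H21 H22 H23 H24 H25 H26 H27 H28 H29 H30 H31 H32 H33 H34 H35 H36 H37 H38 H39 H40 H41 H42 H43 H44 H45 H46 H47 H48 H49 H50 H51 H52 H53 H54 H55 H56 H57 H58 H59 apply -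
  by (insert H0, elim insertE emptyE; simp?; insert H1, elim insertE emptyE; simp?; insert H2, elim insertE emptyE; simp?; insert H3, elim insertE emptyE; simp?; insert H4, elim insertE emptyE; simp?; insert H5, elim insertE emptyE; simp?; insert H6, elim insertE emptyE; simp?; insert H7, elim insertE emptyE; simp?; insert H8, elim insertE emptyE; simp?; insert H9, elim insertE emptyE; simp?; insert H10, elim insertE emptyE; simp?; insert H11, elim insertE emptyE; simp?)
definition Xo :: "spt set" where "Xo = set (XL e0 e1 e2 e3)"
definition Yo :: "spt set" where "Yo = set (YL e0 e1 e2 e3)"

lemma core:
  assumes ov: "ovoid S" and d0: "(e0,e0,e0) \<in> S" and d1: "(e1,e1,e1) \<in> S"
    and d2: "(e2,e2,e2) \<in> S" and d3: "(e3,e3,e3) \<in> S"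
  shows "S = Xo \<or> S = Yo"
proof -
  obtain c01 where h01: "c01 \<in> PG13" and m01: "(e0,e1,c01) \<in> S" using ovoid_ex[OF ov ein0 ein1] by blast
  obtain c02 where h02: "c02 \<in> PG13" and m02: "(e0,e2,c02) \<in> S" using ovoid_ex[OF ov ein0 ein2] by blast
  obtain c03 where h03: "c03 \<in> PG13" and m03: "(e0,e3,c03) \<in> S" using ovoid_ex[OF ov ein0 ein3] by blast
  obtain c10 where h10: "c10 \<in> PG13" and m10: "(e1,e0,c10) \<in> S" using ovoid_ex[OF ov ein1 ein0] by blast
  obtain c12 where h12: "c12 \<in> PG13" and m12: "(e1,e2,c12) \<in> S" using ovoid_ex[OF ov ein1 ein2] by blast
  obtain c13 where h13: "c13 \<in> PG13" and m13: "(e1,e3,c13) \<in> S" using ovoid_ex[OF ov ein1 ein3] by blast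
  obtain c20 where h20: "c20 \<in> PG13" and m20: "(e2,e0,c20) \<in> S" using ovoid_ex[OF ov ein2 ein0] by blast
  obtain c21 where h21: "c21 \<in> PG13" and m21: "(e2,e1,c21) \<in> S" using ovoid_ex[OF ov ein2 ein1] by blast
  obtain c23 where h23: "c23 \<in> PG13" and m23: "(e2,e3,c23) \<in> S" using ovoid_ex[OF ov ein2 ein3] by blast
  obtain c30 where h30: "c30 \<in> PG13" and m30: "(e3,e0,c30) \<in> S" using ovoid_ex[OF ov ein3 ein0] by blast
  obtain c31 where h31: "c31 \<in> PG13" and m31: "(e3,e1,c31) \<in> S" using ovoid_ex[OF ov ein3 ein1] by blast
  obtain c32 where h32: "c32 \<in> PG13" and m32: "(e3,e2,c32) \<in> S" using ovoid_ex[OF ov ein3 ein2] by blast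
  have n0: "e0 \<noteq> c01" by (rule rowdiff[OF ov d0 m01]) simp
  have n1: "e0 \<noteq> c02" by (rule rowdiff[OF ov d0 m02]) simp
  have n2: "e0 \<noteq> c03" by (rule rowdiff[OF ov d0 m03]) simp
  have n3: "c01 \<noteq> c02" by (rule rowdiff[OF ov m01 m02]) simp
  have n4: "c01 \<noteq> c03" by (rule rowdiff[OF ov m01 m03]) simp
  have n5: "c02 \<noteq> c03" by (rule rowdiff[OF ov m02 m03]) simp
  have n6: "c10 \<noteq> e1" by (rule rowdiff[OF ov m10 d1]) simp
  have n7: "c10 \<noteq> c12" by (rule rowdiff[OF ov m10 m12]) simp
  have n8: "c10 \<noteq> c13" by (rule rowdiff[OF ov m10 m13]) simp
  have n9: "e1 \<noteq> c12" by (rule rowdiff[OF ov d1 m12]) simp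
  have n10: "e1 \<noteq> c13" by (rule rowdiff[OF ov d1 m13]) simp
  have n11: "c12 \<noteq> c13" by (rule rowdiff[OF ov m12 m13]) simp
  have n12: "c20 \<noteq> c21" by (rule rowdiff[OF ov m20 m21]) simp
  have n13: "c20 \<noteq> e2" by (rule rowdiff[OF ov m20 d2]) simp
  have n14: "c20 \<noteq> c23" by (rule rowdiff[OF ov m20 m23]) simp
  have n15: "c21 \<noteq> e2" by (rule rowdiff[OF ov m21 d2]) simp
  have n16: "c21 \<noteq> c23" by (rule rowdiff[OF ov m21 m23]) simp
  have n17: "e2 \<noteq> c23" by (rule rowdiff[OF ov d2 m23]) simp
  have n18: "c30 \<noteq> c31" by (rule rowdiff[OF ov m30 m31]) simp
  have n19: "c30 \<noteq> c32" by (rule rowdiff[OF ov m30 m32]) simp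
  have n20: "c30 \<noteq> e3" by (rule rowdiff[OF ov m30 d3]) simp
  have n21: "c31 \<noteq> c32" by (rule rowdiff[OF ov m31 m32]) simp
  have n22: "c31 \<noteq> e3" by (rule rowdiff[OF ov m31 d3]) simp
  have n23: "c32 \<noteq> e3" by (rule rowdiff[OF ov m32 d3]) simp
  have n24: "e0 \<noteq> c10" by (rule coldiff[OF ov d0 m10]) simp
  have n25: "e0 \<noteq> c20" by (rule coldiff[OF ov d0 m20]) simp
  have n26: "e0 \<noteq> c30" by (rule coldiff[OF ov d0 m30]) simp
  have n27: "c10 \<noteq> c20" by (rule coldiff[OF ov m10 m20]) simp
  have n28: "c10 \<noteq> c30" by (rule coldiff[OF ov m10 m30]) simp
  have n29: "c20 \<noteq> c30" by (rule coldiff[OF ov m20 m30]) simp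
  have n30: "c01 \<noteq> e1" by (rule coldiff[OF ov m01 d1]) simp
  have n31: "c01 \<noteq> c21" by (rule coldiff[OF ov m01 m21]) simp
  have n32: "c01 \<noteq> c31" by (rule coldiff[OF ov m01 m31]) simp
  have n33: "e1 \<noteq> c21" by (rule coldiff[OF ov d1 m21]) simp
  have n34: "e1 \<noteq> c31" by (rule coldiff[OF ov d1 m31]) simp
  have n35: "c21 \<noteq> c31" by (rule coldiff[OF ov m21 m31]) simp
  have n36: "c02 \<noteq> c12" by (rule coldiff[OF ov m02 m12]) simp
  have n37: "c02 \<noteq> e2" by (rule coldiff[OF ov m02 d2]) simp
  have n38: "c02 \<noteq> c32" by (rule coldiff[OF ov m02 m32]) simp
  have n39: "c12 \<noteq> e2" by (rule coldiff[OF ov m12 d2]) simp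
  have n40: "c12 \<noteq> c32" by (rule coldiff[OF ov m12 m32]) simp
  have n41: "e2 \<noteq> c32" by (rule coldiff[OF ov d2 m32]) simp
  have n42: "c03 \<noteq> c13" by (rule coldiff[OF ov m03 m13]) simp
  have n43: "c03 \<noteq> c23" by (rule coldiff[OF ov m03 m23]) simp
  have n44: "c03 \<noteq> e3" by (rule coldiff[OF ov m03 d3]) simp
  have n45: "c13 \<noteq> c23" by (rule coldiff[OF ov m13 m23]) simp
  have n46: "c13 \<noteq> e3" by (rule coldiff[OF ov m13 d3]) simp
  have n47: "c23 \<noteq> e3" by (rule coldiff[OF ov m23 d3]) simp
  have "(c01 = e2 \<and> c02 = e3 \<and> c03 = e1 \<and> c10 = e3 \<and> c12 = e0 \<and> c13 = e2 \<and> c20 = e1 \<and> c21 = e3 \<and> c23 = e0 \<and> c30 = e2 \<and> c31 = e0 \<and> c32 = e1) \<or> (c01 = e3 \<and> c02 = e1 \<and> c03 = e2 \<and> c10 = e2 \<and> c12 = e3 \<and> c13 = e0 \<and> c20 = e3 \<and> c21 = e0 \<and> c23 = e1 \<and> c30 = e1 \<and> c31 = e2 \<and> c32 = e0)"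
    apply (rule search)
    using n0 n1 n2 n3 n4 n5 n6 n7 n8 n9 n10 n11 n12 n13 n14 n15 n16 n17 n18 n19 n20 n21 n22 n23 n24 n25 n26 n27 n28 n29 n30 n31 n32 n33 n34 n35 n36 n37 n38 n39 n40 n41 n42 n43 n44 n45 n46 n47 h01 h02 h03 h10 h12 h13 h20 h21 h23 h30 h31 h32 unfolding PG13_eq by simp_all
  then show ?thesis
  proof
    assume "c01 = e2 \<and> c02 = e3 \<and> c03 = e1 \<and> c10 = e3 \<and> c12 = e0 \<and> c13 = e2 \<and> c20 = e1 \<and> c21 = e3 \<and> c23 = e0 \<and> c30 = e2 \<and> c31 = e0 \<and> c32 = e1"
    then have "Xo \<subseteq> S" unfolding Xo_def XL_def using d0 d1 d2 d3 m01 m02 m03 m10 m12 m13 m20 m21 m23 m30 m31 m32 by simp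
    then have "S = Xo" by (rule ovoid_eqI[OF ov]) (simp add: PG13_eq Xo_def XL_def)
    then show ?thesis by simp
  next
    assume "c01 = e3 \<and> c02 = e1 \<and> c03 = e2 \<and> c10 = e2 \<and> c12 = e3 \<and> c13 = e0 \<and> c20 = e3 \<and> c21 = e0 \<and> c23 = e1 \<and> c30 = e1 \<and> c31 = e2 \<and> c32 = e0"
    then have "Yo \<subseteq> S" unfolding Yo_def YL_def using d0 d1 d2 d3 m01 m02 m03 m10 m12 m13 m20 m21 m23 m30 m31 m32 by simp
    then have "S = Yo" by (rule ovoid_eqI[OF ov]) (simp add: PG13_eq Yo_def YL_def)
    then show ?thesis by simp
  qed
qed

lemma card4E:
  assumes "card A = 4"
  obtains w x y z where "A = {w,x,y,z}" "w \<noteq> x" "w \<noteq> y" "w \<noteq> z" "x \<noteq> y" "x \<noteq> z" "y \<noteq> z"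
proof -
  have "card A = Suc 3" using assms by simp
  then obtain w B where B: "A = insert w B" "w \<notin> B" "card B = 3" by (blast dest: card_eq_SucD)
  then obtain x y z where "B = {x,y,z}" "x \<noteq> y" "y \<noteq> z" "x \<noteq> z" by (auto simp: card_3_iff)
  then show ?thesis using that B by blast
qed

lemma ovoid_image:
  assumes ov: "ovoid S" and inj: "inj_on h segre_points" and hp: "h ` segre_points \<subseteq> segre_points"
    and ll: "\<And>l. l \<in> segre_lines \<Longrightarrow> \<exists>l'\<in>segre_lines. \<forall>p\<in>segre_points. h p \<in> l \<longleftrightarrow> p \<in> l'"
  shows "ovoid (h ` S)"
proof -
  have Sp: "S \<subseteq> segre_points" using ov unfolding ovoid_def by simp
  show ?thesis unfolding ovoid_def
  proof (intro conjI ballI)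
    show "h ` S \<subseteq> segre_points" using Sp hp by blast
    fix l assume l: "l \<in> segre_lines"
    obtain l' where l': "l' \<in> segre_lines" "\<forall>p\<in>segre_points. h p \<in> l \<longleftrightarrow> p \<in> l'" using ll[OF l] by blast
    have "h ` S \<inter> l = h ` (S \<inter> l')" using Sp l'(2) by blast
    moreover have "inj_on h (S \<inter> l')" using inj Sp by (meson inj_on_subset le_infI1)
    ultimately have "card (h ` S \<inter> l) = card (S \<inter> l')" by (simp add: card_image)
    also have "\<dots> = 1" using ov l'(1) unfolding ovoid_def by simp
    finally show "card (h ` S \<inter> l) = 1" .
  qed
qed

lemma bij_pre:
  assumes "bij_betw \<sigma> PG13 PG13" "b \<in> PG13"
  obtains b' where "b' \<in> PG13" "\<sigma> b' = b" "\<forall>y\<in>PG13. \<sigma> y = b \<longleftrightarrow> y = b'"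
proof -
  obtain b' where b': "b' \<in> PG13" "\<sigma> b' = b" using assms by (metis bij_betw_iff_bijections)
  have "\<forall>y\<in>PG13. \<sigma> y = b \<longleftrightarrow> y = b'"
    using assms(1) b' unfolding bij_betw_def inj_on_def by blast
  then show ?thesis using that b' by blast
qed

lemma hmap_ovoid:
  assumes bs: "bij_betw \<sigma> PG13 PG13" and bt: "bij_betw \<tau> PG13 PG13" and ov: "ovoid S"
  shows "ovoid ((\<lambda>(x,y,z). (x, \<sigma> y, \<tau> z)) ` S)"
proof (rule ovoid_image[OF ov])
  let ?h = "\<lambda>(x,y,z). (x, \<sigma> y, \<tau> z)"
  have iS: "inj_on \<sigma> PG13" "\<sigma> ` PG13 = PG13" using bs unfolding bij_betw_def by auto
  have it: "inj_on \<tau> PG13" "\<tau> ` PG13 = PG13" using bt unfolding bij_betw_def by auto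
  show "inj_on ?h segre_points"
    unfolding segre_points_def using iS(1) it(1) by (auto simp: inj_on_def)
  show "?h ` segre_points \<subseteq> segre_points"
    unfolding segre_points_def using iS(2) it(2) by auto
  fix l assume "l \<in> segre_lines"
  then consider (A) b c where "b \<in> PG13" "c \<in> PG13" "l = {(x, b, c) | x. x \<in> PG13}"
    | (B) a c where "a \<in> PG13" "c \<in> PG13" "l = {(a, x, c) | x. x \<in> PG13}"
    | (C) a b where "a \<in> PG13" "b \<in> PG13" "l = {(a, b, x) | x. x \<in> PG13}"
    unfolding segre_lines_def by blast
  then show "\<exists>l'\<in>segre_lines. \<forall>p\<in>segre_points. ?h p \<in> l \<longleftrightarrow> p \<in> l'"
  proof cases
    case A
    obtain b' where b': "b' \<in> PG13" "\<forall>y\<in>PG13. \<sigma> y = b \<longleftrightarrow> y = b'" using bij_pre[OF bs A(1)] by blast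
    obtain c' where c': "c' \<in> PG13" "\<forall>y\<in>PG13. \<tau> y = c \<longleftrightarrow> y = c'" using bij_pre[OF bt A(2)] by blast
    show ?thesis
    proof (intro bexI ballI)
      show "{(x, b', c') | x. x \<in> PG13} \<in> segre_lines" by (rule L1[OF b'(1) c'(1)])
      fix p assume "p \<in> segre_points"
      then obtain x y z where p: "p = (x,y,z)" "x \<in> PG13" "y \<in> PG13" "z \<in> PG13"
        unfolding segre_points_def by blast
      show "?h p \<in> l \<longleftrightarrow> p \<in> {(x, b', c') | x. x \<in> PG13}"
        using p b'(2) c'(2) A(3) by auto
    qed
  next
    case B
    obtain c' where c': "c' \<in> PG13" "\<forall>y\<in>PG13. \<tau> y = c \<longleftrightarrow> y = c'" using bij_pre[OF bt B(2)] by blast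
    show ?thesis
    proof (intro bexI ballI)
      show "{(a, x, c') | x. x \<in> PG13} \<in> segre_lines" by (rule L2[OF B(1) c'(1)])
      fix p assume "p \<in> segre_points"
      then obtain x y z where p: "p = (x,y,z)" "x \<in> PG13" "y \<in> PG13" "z \<in> PG13"
        unfolding segre_points_def by blast
      have "\<sigma> y \<in> PG13" using iS(2) p(3) by blast
      then show "?h p \<in> l \<longleftrightarrow> p \<in> {(a, x, c') | x. x \<in> PG13}"
        unfolding p(1) prod.case using p(2-4) c'(2) B(3) by blast
    qed
  next
    case C
    obtain b' where b': "b' \<in> PG13" "\<forall>y\<in>PG13. \<sigma> y = b \<longleftrightarrow> y = b'" using bij_pre[OF bs C(2)] by blast
    show ?thesis
    proof (intro bexI ballI)
      show "{(a, b', x) | x. x \<in> PG13} \<in> segre_lines" by (rule L3[OF C(1) b'(1)])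
      fix p assume "p \<in> segre_points"
      then obtain x y z where p: "p = (x,y,z)" "x \<in> PG13" "y \<in> PG13" "z \<in> PG13"
        unfolding segre_points_def by blast
      have "\<tau> z \<in> PG13" using it(2) p(4) by blast
      then show "?h p \<in> l \<longleftrightarrow> p \<in> {(a, b', x) | x. x \<in> PG13}"
        unfolding p(1) prod.case using p(2-4) b'(2) C(3) by blast
    qed
  qed
qed


lemma FT_snd_nauru: "set (map snd (FT a0 a1 a2 a3)) = nauru_vertices"
  unfolding FT_snd nauru_eq by auto


lemma edist: "e0 \<noteq> e1" "e0 \<noteq> e2" "e0 \<noteq> e3" "e1 \<noteq> e2" "e1 \<noteq> e3" "e2 \<noteq> e3"
  by simp_all

lemma card_PG13: "card PG13 = 4"
  unfolding PG13_eq by simp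

lemma four_eq:
  assumes "{u1,u2,u3,u4} \<subseteq> PG13" "u1 \<noteq> u2" "u1 \<noteq> u3" "u1 \<noteq> u4" "u2 \<noteq> u3" "u2 \<noteq> u4" "u3 \<noteq> u4"
  shows "{u1,u2,u3,u4} = PG13"
proof (rule card_subset_eq)
  show "finite PG13" unfolding PG13_eq by simp
  show "card {u1,u2,u3,u4} = card PG13" using assms(2-) card_PG13 by simp
qed (rule assms(1))

lemma sd3_all: "sdist (a,b,c) (a',b',c') = 3 \<Longrightarrow> a \<noteq> a' \<and> b \<noteq> b' \<and> c \<noteq> c'"
  unfolding sdist_def by (simp split: if_splits)

lemma hmap_inj:
  assumes "inj_on \<sigma> PG13" "inj_on \<tau> PG13"
  shows "inj_on (\<lambda>(x,y,z). (x, \<sigma> y, \<tau> z)) segre_points"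
proof (rule inj_onI)
  fix p q assume p0: "p \<in> segre_points" and q0: "q \<in> segre_points"
    and e: "(\<lambda>(x,y,z). (x, \<sigma> y, \<tau> z)) p = (\<lambda>(x,y,z). (x, \<sigma> y, \<tau> z)) q"
  obtain x y z where p: "p = (x,y,z)" "y \<in> PG13" "z \<in> PG13" using p0 unfolding segre_points_def by blast
  obtain x' y' z' where q: "q = (x',y',z')" "y' \<in> PG13" "z' \<in> PG13" using q0 unfolding segre_points_def by blast
  have "x = x'" "\<sigma> y = \<sigma> y'" "\<tau> z = \<tau> z'" using e unfolding p q by simp_all
  moreover have "y = y'" using assms(1) p q \<open>\<sigma> y = \<sigma> y'\<close> by (meson inj_on_eq_iff)
  moreover have "z = z'" using assms(2) p q \<open>\<tau> z = \<tau> z'\<close> by (meson inj_on_eq_iff)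
  ultimately show "p = q" unfolding p q by simp
qed

lemma hmap_sdist:
  assumes "inj_on \<sigma> PG13" "inj_on \<tau> PG13" "p \<in> segre_points" "q \<in> segre_points"
  shows "sdist ((\<lambda>(x,y,z). (x, \<sigma> y, \<tau> z)) p) ((\<lambda>(x,y,z). (x, \<sigma> y, \<tau> z)) q) = sdist p q"
proof -
  obtain x y z where p: "p = (x,y,z)" "y \<in> PG13" "z \<in> PG13" using assms(3) unfolding segre_points_def by blast
  obtain x' y' z' where q: "q = (x',y',z')" "y' \<in> PG13" "z' \<in> PG13" using assms(4) unfolding segre_points_def by blast
  have "\<sigma> y = \<sigma> y' \<longleftrightarrow> y = y'" using assms(1) p q by (meson inj_on_eq_iff)
  moreover have "\<tau> z = \<tau> z' \<longleftrightarrow> z = z'" using assms(2) p q by (meson inj_on_eq_iff)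
  ultimately show ?thesis unfolding p q sdist_def by simp
qed

lemma tab_mem: "p \<in> set (map fst t) \<Longrightarrow> (p, the (map_of t p)) \<in> set t"
proof -
  assume "p \<in> set (map fst t)"
  then have "map_of t p \<noteq> None" by (simp add: map_of_eq_None_iff)
  then obtain v where "map_of t p = Some v" by blast
  then show ?thesis by (simp add: map_of_SomeD)
qed

lemma bij_from_img:
  assumes "\<sigma> ` PG13 = PG13"
  shows "bij_betw \<sigma> PG13 PG13"
proof -
  have fin: "finite PG13" by (simp add: PG13_eq)
  have "inj_on \<sigma> PG13" by (rule eq_card_imp_inj_on[OF fin]) (simp only: assms)
  then show ?thesis using assms by (simp add: bij_betw_def)
qed

theorem mainTheorem6:
  assumes "ovoid O1" and "ovoid O2"
    and "\<not> projective_ovoid O1" and "\<not> projective_ovoid O2"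
    and "card (O1 \<inter> O2) = 4"
    and "\<forall>p \<in> O1 \<inter> O2. \<forall>q \<in> O1 \<inter> O2. p \<noteq> q \<longrightarrow> sdist p q = 3"
  shows "\<exists>f. bij_betw f ((O1 - O2) \<union> (O2 - O1)) nauru_vertices \<and>
    (\<forall>p \<in> (O1 - O2) \<union> (O2 - O1). \<forall>q \<in> (O1 - O2) \<union> (O2 - O1).
        collinear p q \<longleftrightarrow> nauru_adj (f p) (f q))"
proof -
  have P1: "O1 \<subseteq> segre_points" "O2 \<subseteq> segre_points" using assms(1,2) unfolding ovoid_def by simp_all
  obtain w x y z where I: "O1 \<inter> O2 = {w,x,y,z}" and dI: "w \<noteq> x" "w \<noteq> y" "w \<noteq> z" "x \<noteq> y" "x \<noteq> z" "y \<noteq> z"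
    using card4E[OF assms(5)] by blast
  obtain a1 b1 c1 where w: "w = (a1,b1,c1)" by (cases w)
  obtain a2 b2 c2 where x: "x = (a2,b2,c2)" by (cases x)
  obtain a3 b3 c3 where y: "y = (a3,b3,c3)" by (cases y)
  obtain a4 b4 c4 where z: "z = (a4,b4,c4)" by (cases z)
  have mem: "w \<in> O1" "x \<in> O1" "y \<in> O1" "z \<in> O1" "w \<in> O2" "x \<in> O2" "y \<in> O2" "z \<in> O2"
    using I by blast+
  have A6: "sdist p q = 3" if "p \<in> {w,x,y,z}" "q \<in> {w,x,y,z}" "p \<noteq> q" for p q
    using assms(6) that unfolding I by blast
  have s: "sdist w x = 3" "sdist w y = 3" "sdist w z = 3" "sdist x y = 3" "sdist x z = 3" "sdist y z = 3"
    by (rule A6; simp add: dI)+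
  have da: "a1 \<noteq> a2" "a1 \<noteq> a3" "a1 \<noteq> a4" "a2 \<noteq> a3" "a2 \<noteq> a4" "a3 \<noteq> a4"
    and db: "b1 \<noteq> b2" "b1 \<noteq> b3" "b1 \<noteq> b4" "b2 \<noteq> b3" "b2 \<noteq> b4" "b3 \<noteq> b4"
    and dc: "c1 \<noteq> c2" "c1 \<noteq> c3" "c1 \<noteq> c4" "c2 \<noteq> c3" "c2 \<noteq> c4" "c3 \<noteq> c4"
    using sd3_all[OF s(1)[unfolded w x]] sd3_all[OF s(2)[unfolded w y]] sd3_all[OF s(3)[unfolded w z]]
      sd3_all[OF s(4)[unfolded x y]] sd3_all[OF s(5)[unfolded x z]] sd3_all[OF s(6)[unfolded y z]]
    by blast+
  have inPG: "a1 \<in> PG13" "b1 \<in> PG13" "c1 \<in> PG13" "a2 \<in> PG13" "b2 \<in> PG13" "c2 \<in> PG13"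
    "a3 \<in> PG13" "b3 \<in> PG13" "c3 \<in> PG13" "a4 \<in> PG13" "b4 \<in> PG13" "c4 \<in> PG13"
    using ovoid_pt[OF assms(1)] mem(1-4) unfolding w x y z by blast+
  have Ae: "{a1,a2,a3,a4} = PG13" by (rule four_eq) (use inPG da in simp_all)
  have Be: "{b1,b2,b3,b4} = PG13" by (rule four_eq) (use inPG db in simp_all)
  have Ce: "{c1,c2,c3,c4} = PG13" by (rule four_eq) (use inPG dc in simp_all)
  define \<sigma> where "\<sigma> v = (if v = b1 then a1 else if v = b2 then a2 else if v = b3 then a3 else a4)" for v
  define \<tau> where "\<tau> v = (if v = c1 then a1 else if v = c2 then a2 else if v = c3 then a3 else a4)" for v
  have hs: "\<sigma> b1 = a1" "\<sigma> b2 = a2" "\<sigma> b3 = a3" "\<sigma> b4 = a4"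
    unfolding \<sigma>_def using db db[THEN not_sym] by simp_all
  have ht: "\<tau> c1 = a1" "\<tau> c2 = a2" "\<tau> c3 = a3" "\<tau> c4 = a4"
    unfolding \<tau>_def using dc dc[THEN not_sym] by simp_all
  have "\<sigma> ` {b1,b2,b3,b4} = {a1,a2,a3,a4}" by (simp add: hs)
  then have "\<sigma> ` PG13 = PG13" unfolding Ae Be .
  then have bs: "bij_betw \<sigma> PG13 PG13" by (rule bij_from_img)
  have "\<tau> ` {c1,c2,c3,c4} = {a1,a2,a3,a4}" by (simp add: ht)
  then have "\<tau> ` PG13 = PG13" unfolding Ae Ce .
  then have bt: "bij_betw \<tau> PG13 PG13" by (rule bij_from_img)
  have iS: "inj_on \<sigma> PG13" "inj_on \<tau> PG13" using bs bt unfolding bij_betw_def by simp_all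
  define h where "h = (\<lambda>(x::vec2,y::vec2,z::vec2). (x, \<sigma> y, \<tau> z))"
  have hinj: "inj_on h segre_points" unfolding h_def by (rule hmap_inj[OF iS])
  have hw: "h w = (a1,a1,a1)" "h x = (a2,a2,a2)" "h y = (a3,a3,a3)" "h z = (a4,a4,a4)"
    unfolding h_def w x y z using hs ht by simp_all
  have ov1: "ovoid (h ` O1)" unfolding h_def by (rule hmap_ovoid[OF bs bt assms(1)])
  have ov2: "ovoid (h ` O2)" unfolding h_def by (rule hmap_ovoid[OF bs bt assms(2)])
  have diag: "(e, e, e) \<in> h ` O1 \<and> (e, e, e) \<in> h ` O2" if "e \<in> PG13" for e
  proof -
    have "e \<in> {a1,a2,a3,a4}" using that Ae by simp
    then have "e = a1 \<or> e = a2 \<or> e = a3 \<or> e = a4" by simp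
    then show ?thesis
    proof (elim disjE)
      assume "e = a1" then show ?thesis using hw(1) mem(1,5) by (metis image_eqI)
    next
      assume "e = a2" then show ?thesis using hw(2) mem(2,6) by (metis image_eqI)
    next
      assume "e = a3" then show ?thesis using hw(3) mem(3,7) by (metis image_eqI)
    next
      assume "e = a4" then show ?thesis using hw(4) mem(4,8) by (metis image_eqI)
    qed
  qed
  have E: "e0 \<in> PG13" "e1 \<in> PG13" "e2 \<in> PG13" "e3 \<in> PG13" by (simp_all add: PG13_eq)
  have c1: "h ` O1 = Xo \<or> h ` O1 = Yo" by (rule core[OF ov1]) (use diag E in blast)+
  have c2: "h ` O2 = Xo \<or> h ` O2 = Yo" by (rule core[OF ov2]) (use diag E in blast)+
  have hI: "h ` O1 \<inter> h ` O2 = {(a1,a1,a1),(a2,a2,a2),(a3,a3,a3),(a4,a4,a4)}"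
    using inj_on_image_Int[OF hinj P1] I hw by simp
  have dg: "\<forall>u\<in>h ` O1 \<inter> h ` O2. fst u = fst (snd u)" unfolding hI by simp
  have Xn: "(e0,e1,e2) \<in> Xo" unfolding Xo_def XL_def by simp
  have Yn: "(e0,e1,e3) \<in> Yo" unfolding Yo_def YL_def by simp
  have neq: "h ` O1 \<noteq> h ` O2"
  proof
    assume eq: "h ` O1 = h ` O2"
    from c1 show False
    proof
      assume "h ` O1 = Xo"
      then have "(e0,e1,e2) \<in> h ` O1 \<inter> h ` O2" using Xn eq by simp
      then have "fst (e0,e1,e2) = fst (snd (e0,e1,e2))" using dg by blast
      then show False using edist(1) by simp
    next
      assume "h ` O1 = Yo"
      then have "(e0,e1,e3) \<in> h ` O1 \<inter> h ` O2" using Yn eq by simp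
      then have "fst (e0,e1,e3) = fst (snd (e0,e1,e3))" using dg by blast
      then show False using edist(1) by simp
    qed
  qed
  let ?Sym = "(O1 - O2) \<union> (O2 - O1)"
  have SymP: "?Sym \<subseteq> segre_points" using P1 by blast
  have "h ` ?Sym = (h ` O1 - h ` O2) \<union> (h ` O2 - h ` O1)"
    unfolding image_Un using inj_on_image_set_diff[OF hinj] P1 by blast
  also have "\<dots> = set (ZL e0 e1 e2 e3)"
    using c1 c2 neq ZLeq[OF edist] unfolding Xo_def[symmetric] Yo_def[symmetric]
    by (metis Un_commute)
  finally have hSym: "h ` ?Sym = set (ZL e0 e1 e2 e3)" .
  define fn where "fn = (\<lambda>p. the (map_of (FT e0 e1 e2 e3) p))"
  have b1: "bij_betw h ?Sym (set (ZL e0 e1 e2 e3))"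
    by (rule bij_betw_imageI[OF inj_on_subset[OF hinj SymP] hSym])
  have fst_eq: "set (map fst (FT e0 e1 e2 e3)) = set (ZL e0 e1 e2 e3)" using FT_fst[OF edist] by simp
  have b2: "bij_betw fn (set (ZL e0 e1 e2 e3)) nauru_vertices"
  proof (rule bij_betw_imageI)
    show "inj_on fn (set (ZL e0 e1 e2 e3))"
      using tab_inj[OF FT_dist[OF edist] FT_snd_dist] unfolding fn_def fst_eq .
    show "fn ` set (ZL e0 e1 e2 e3) = nauru_vertices"
      using tab_img[OF FT_dist[OF edist]] unfolding fn_def FT_snd_nauru fst_eq .
  qed
  have adj: "collinear p q \<longleftrightarrow> nauru_adj ((fn \<circ> h) p) ((fn \<circ> h) q)" if p: "p \<in> ?Sym" and q: "q \<in> ?Sym" for p q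
  proof -
    have hp: "h p \<in> set (map fst (FT e0 e1 e2 e3))" "h q \<in> set (map fst (FT e0 e1 e2 e3))"
      using p q hSym fst_eq by blast+
    have "sdist (h p) (h q) = sdist p q"
      unfolding h_def by (rule hmap_sdist[OF iS]) (use p q SymP in blast)+
    then have "collinear p q \<longleftrightarrow> sdist (h p) (h q) = 1"
      unfolding collinear_def by simp
    also have "\<dots> \<longleftrightarrow> nauru_adj (fn (h p)) (fn (h q))"
    proof -
      have "row_ok e0 e1 e2 e3 (h p) (fn (h p))"
        using FT_adj[OF edist] tab_mem[OF hp(1)] unfolding fn_def by blast
      then have "\<forall>(q',y)\<in>set (FT e0 e1 e2 e3). sd3 (h p) q' = 1 \<longleftrightarrow> nauru_adj (fn (h p)) y"
        using row_ok_def[OF edist] by blast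
      from bspec[OF this tab_mem[OF hp(2)]]
      show ?thesis unfolding sdist_sd3 fn_def by simp
    qed
    finally show ?thesis by simp
  qed
  show ?thesis
    by (rule exI[of _ "fn \<circ> h"]) (use bij_betw_trans[OF b1 b2] adj in blast)
qed
end
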